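(* Let $r\ge2$, $k\ge 3$, and let $\widehat{F}_k$ be any $r$-coloring of $K_k$. Let $G$ be a graph on $n$ vertices, $S\subseteq V(G)$ an independent set with $s=|S|$, $H=G-S$ and $A=V(G)\setminus S$. Then there exists a vertex $v\in S$ with the following property: if $\widetilde{G}$ is the graph with vertex set $V(H)\cup\widetilde{S}$, where $\widetilde{S}$ is an independent set of $s$ new vertices each having neighborhood exactly $N_G(v)$ (so each is a twin of $v$), and $\widetilde{G}[A]=G[A]$, then $c_{r,\widehat{F}_k}(\widetilde{G})\ge c_{r,\widehat{F}_k}(G)$.
   Context: An $r$-coloring of a graph assigns colors from $\{1,\dots,r\}$ to edges (not necessarily properly). A copy of $\widehat{F}_k$ in a colored graph is a set of $k$ pairwise adjacent vertices admitting a bijection to $V(K_k)$ under which two edges have equal colors iff their images have equal colors in $\widehat{F}_k$; a coloring is $\widehat{F}_k$-free if it has no copy. $c_{r,\widehat{F}_k}(G)$ is the number of $\widehat{F}_k$-free $r$-colorings of $E(G)$. Two vertices are twins if they are non-adjacent and have the same neighborhood. *)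

theory Defs
  imports "HOL-Library.FuncSet"
begin

definition simple_graph :: "'a set \<Rightarrow> 'a set set \<Rightarrow> bool" where
  "simple_graph V E \<longleftrightarrow> finite V \<and> (\<forall>e\<in>E. e \<subseteq> V \<and> card e = 2)"

definition nbhd :: "'a set set \<Rightarrow> 'a \<Rightarrow> 'a set" where
  "nbhd E v = {u. {u, v} \<in> E}"

definition indep_set :: "'a set set \<Rightarrow> 'a set \<Rightarrow> bool" where
  "indep_set E S \<longleftrightarrow> (\<forall>x\<in>S. \<forall>y\<in>S. {x, y} \<notin> E)"

definition Kk_edges :: "nat \<Rightarrow> nat set set" where
  "Kk_edges k = {e. e \<subseteq> {0..<k} \<and> card e = 2}"

definition colorings :: "nat \<Rightarrow> 'a set set \<Rightarrow> ('a set \<Rightarrow> nat) set" where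
  "colorings r E = E \<rightarrow>\<^sub>E {1..r}"

definition is_copy :: "'a set \<Rightarrow> 'a set set \<Rightarrow> ('a set \<Rightarrow> nat) \<Rightarrow> nat \<Rightarrow> (nat set \<Rightarrow> nat) \<Rightarrow> 'a set \<Rightarrow> bool" where
  "is_copy V E c k f X \<longleftrightarrow> X \<subseteq> V \<and> card X = k \<and>
     (\<forall>x\<in>X. \<forall>y\<in>X. x \<noteq> y \<longrightarrow> {x, y} \<in> E) \<and>
     (\<exists>\<phi>. bij_betw \<phi> X {0..<k} \<and>
        (\<forall>x\<in>X. \<forall>y\<in>X. \<forall>x'\<in>X. \<forall>y'\<in>X. x \<noteq> y \<longrightarrow> x' \<noteq> y' \<longrightarrow>
           (c {x, y} = c {x', y'} \<longleftrightarrow> f {\<phi> x, \<phi> y} = f {\<phi> x', \<phi> y'})))"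

definition pattern_free :: "'a set \<Rightarrow> 'a set set \<Rightarrow> ('a set \<Rightarrow> nat) \<Rightarrow> nat \<Rightarrow> (nat set \<Rightarrow> nat) \<Rightarrow> bool" where
  "pattern_free V E c k f \<longleftrightarrow> \<not> (\<exists>X. is_copy V E c k f X)"

definition count_free :: "nat \<Rightarrow> nat \<Rightarrow> (nat set \<Rightarrow> nat) \<Rightarrow> 'a set \<Rightarrow> 'a set set \<Rightarrow> nat" where
  "count_free r k f V E = card {c \<in> colorings r E. pattern_free V E c k f}"

(* The graph G~: vertices Inl ` A (A = V - S) and s new vertices Inr i (i < s);
   G~[A] = G[A], and each new vertex has neighbourhood exactly N_G(v). *)
definition twin_vertices :: "'a set \<Rightarrow> 'a set \<Rightarrow> ('a + nat) set" where
  "twin_vertices V S = Inl ` (V - S) \<union> Inr ` {0..<card S}"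

definition twin_edges :: "'a set \<Rightarrow> 'a set set \<Rightarrow> 'a set \<Rightarrow> 'a \<Rightarrow> ('a + nat) set set" where
  "twin_edges V E S v =
     {Inl ` e | e. e \<in> E \<and> e \<subseteq> V - S} \<union>
     {{Inl u, Inr i} | u i. u \<in> nbhd E v \<and> i < card S}"

end

theory Submission
  imports Defs "HOL-Analysis.Convex"
begin


lemma copy_aux:
  assumes "\<forall>x\<in>X. \<forall>y\<in>X. x \<noteq> y \<longrightarrow> {x, y} \<in> E" "\<And>e. e \<in> E \<Longrightarrow> c e = c' e"
  shows "(\<forall>x\<in>X. \<forall>y\<in>X. \<forall>x'\<in>X. \<forall>y'\<in>X. x \<noteq> y \<longrightarrow> x' \<noteq> y' \<longrightarrow>
           (c {x, y} = c {x', y'} \<longleftrightarrow> P x y x' y')) =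
        (\<forall>x\<in>X. \<forall>y\<in>X. \<forall>x'\<in>X. \<forall>y'\<in>X. x \<noteq> y \<longrightarrow> x' \<noteq> y' \<longrightarrow>
           (c' {x, y} = c' {x', y'} \<longleftrightarrow> P x y x' y'))"
proof -
  have *: "\<And>x y. x\<in>X \<Longrightarrow> y\<in>X \<Longrightarrow> x\<noteq>y \<Longrightarrow> c {x,y} = c' {x,y}" using assms by blast
  have eq: "\<And>x y x' y'. x\<in>X \<Longrightarrow> y\<in>X \<Longrightarrow> x'\<in>X \<Longrightarrow> y'\<in>X \<Longrightarrow> x\<noteq>y \<Longrightarrow> x'\<noteq>y' \<Longrightarrow> (c {x,y} = c {x',y'}) = (c' {x,y} = c' {x',y'})"
    using * by simp
  show ?thesis
    by (intro ball_cong[OF refl] imp_cong[OF refl]) (simp add: eq)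
qed
definition pat :: "('a set \<Rightarrow> nat) \<Rightarrow> (nat set \<Rightarrow> nat) \<Rightarrow> ('a \<Rightarrow> nat) \<Rightarrow> 'a set \<Rightarrow> bool" where
  "pat c f \<phi> X \<longleftrightarrow> (\<forall>x\<in>X. \<forall>y\<in>X. \<forall>x'\<in>X. \<forall>y'\<in>X. x \<noteq> y \<longrightarrow> x' \<noteq> y' \<longrightarrow>
           (c {x, y} = c {x', y'} \<longleftrightarrow> f {\<phi> x, \<phi> y} = f {\<phi> x', \<phi> y'}))"

lemma is_copy_alt: "is_copy V E c k f X \<longleftrightarrow> X \<subseteq> V \<and> card X = k \<and>
     (\<forall>x\<in>X. \<forall>y\<in>X. x \<noteq> y \<longrightarrow> {x, y} \<in> E) \<and> (\<exists>\<phi>. bij_betw \<phi> X {0..<k} \<and> pat c f \<phi> X)"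
  unfolding is_copy_def pat_def by (rule refl)

lemma is_copy_cong:
  assumes "\<And>e. e \<in> E \<Longrightarrow> c e = c' e"
  shows "is_copy V E c k f X = is_copy V E c' k f X"
proof (cases "\<forall>x\<in>X. \<forall>y\<in>X. x \<noteq> y \<longrightarrow> {x, y} \<in> E")
  case True
  have a: "pat c f \<phi> X = pat c' f \<phi> X" for \<phi>
    unfolding pat_def by (rule copy_aux[OF True assms])
  show ?thesis unfolding is_copy_alt by (simp only: a)
next
  case False
  then show ?thesis unfolding is_copy_alt by blast
qed

lemma pattern_free_cong:
  assumes "\<And>e. e \<in> E \<Longrightarrow> c e = c' e"
  shows "pattern_free V E c k f = pattern_free V E c' k f"
proof -
  have "is_copy V E c k f = is_copy V E c' k f" by (intro ext is_copy_cong[OF assms])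
  then show ?thesis unfolding pattern_free_def by simp
qed

lemma is_copy_sub:
  assumes "X \<subseteq> W" "W \<subseteq> V"
  shows "is_copy V E c k f X = is_copy W {e\<in>E. e \<subseteq> W} c k f X"
proof -
  have "(\<forall>x\<in>X. \<forall>y\<in>X. x \<noteq> y \<longrightarrow> {x, y} \<in> E) = (\<forall>x\<in>X. \<forall>y\<in>X. x \<noteq> y \<longrightarrow> {x, y} \<in> {e\<in>E. e \<subseteq> W})"
    using assms by auto
  moreover have "X \<subseteq> V" using assms by blast
  ultimately show ?thesis unfolding is_copy_alt using assms(1) by simp
qed

lemma pat_image:
  assumes "inj h" "\<And>x y. x \<in> X \<Longrightarrow> y \<in> X \<Longrightarrow> x \<noteq> y \<Longrightarrow> c' {h x, h y} = c {x, y}"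
  shows "pat c' f \<phi> (h ` X) = pat c f (\<phi> \<circ> h) X"
proof -
  have hne: "h x \<noteq> h y \<longleftrightarrow> x \<noteq> y" for x y using assms(1) by (meson injD)
  show ?thesis unfolding pat_def
  proof
    assume H: "\<forall>x\<in>h ` X. \<forall>y\<in>h ` X. \<forall>x'\<in>h ` X. \<forall>y'\<in>h ` X. x \<noteq> y \<longrightarrow> x' \<noteq> y' \<longrightarrow>
           (c' {x, y} = c' {x', y'} \<longleftrightarrow> f {\<phi> x, \<phi> y} = f {\<phi> x', \<phi> y'})"
    show "\<forall>x\<in>X. \<forall>y\<in>X. \<forall>x'\<in>X. \<forall>y'\<in>X. x \<noteq> y \<longrightarrow> x' \<noteq> y' \<longrightarrow>
           (c {x, y} = c {x', y'} \<longleftrightarrow> f {(\<phi> \<circ> h) x, (\<phi> \<circ> h) y} = f {(\<phi> \<circ> h) x', (\<phi> \<circ> h) y'})"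
    proof (intro ballI impI)
      fix x y x' y' assume xs: "x \<in> X" "y \<in> X" "x' \<in> X" "y' \<in> X" and ne: "x \<noteq> y" "x' \<noteq> y'"
      have "(c' {h x, h y} = c' {h x', h y'}) = (f {\<phi> (h x), \<phi> (h y)} = f {\<phi> (h x'), \<phi> (h y')})"
        using H[rule_format, OF imageI[OF xs(1)] imageI[OF xs(2)] imageI[OF xs(3)] imageI[OF xs(4)]] ne hne by blast
      then show "(c {x, y} = c {x', y'} \<longleftrightarrow> f {(\<phi> \<circ> h) x, (\<phi> \<circ> h) y} = f {(\<phi> \<circ> h) x', (\<phi> \<circ> h) y'})"
        using assms(2)[OF xs(1,2) ne(1)] assms(2)[OF xs(3,4) ne(2)] by simp
    qed
  next
    assume H: "\<forall>x\<in>X. \<forall>y\<in>X. \<forall>x'\<in>X. \<forall>y'\<in>X. x \<noteq> y \<longrightarrow> x' \<noteq> y' \<longrightarrow>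
           (c {x, y} = c {x', y'} \<longleftrightarrow> f {(\<phi> \<circ> h) x, (\<phi> \<circ> h) y} = f {(\<phi> \<circ> h) x', (\<phi> \<circ> h) y'})"
    show "\<forall>x\<in>h ` X. \<forall>y\<in>h ` X. \<forall>x'\<in>h ` X. \<forall>y'\<in>h ` X. x \<noteq> y \<longrightarrow> x' \<noteq> y' \<longrightarrow>
           (c' {x, y} = c' {x', y'} \<longleftrightarrow> f {\<phi> x, \<phi> y} = f {\<phi> x', \<phi> y'})"
    proof (intro ballI impI)
      fix a b a' b' assume "a \<in> h ` X" "b \<in> h ` X" "a' \<in> h ` X" "b' \<in> h ` X" "a \<noteq> b" "a' \<noteq> b'"
      then obtain x y x' y' where xs: "x \<in> X" "y \<in> X" "x' \<in> X" "y' \<in> X" and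
        eqs: "a = h x" "b = h y" "a' = h x'" "b' = h y'" by blast
      then have ne: "x \<noteq> y" "x' \<noteq> y'" using \<open>a \<noteq> b\<close> \<open>a' \<noteq> b'\<close> by auto
      have "(c {x, y} = c {x', y'}) = (f {(\<phi> \<circ> h) x, (\<phi> \<circ> h) y} = f {(\<phi> \<circ> h) x', (\<phi> \<circ> h) y'})"
        using H[rule_format, OF xs ne] .
      then show "(c' {a, b} = c' {a', b'}) = (f {\<phi> a, \<phi> b} = f {\<phi> a', \<phi> b'})"
        using assms(2)[OF xs(1,2) ne(1)] assms(2)[OF xs(3,4) ne(2)] eqs by simp
    qed
  qed
qed

lemma is_copy_image:
  assumes "inj h" "\<And>e. e \<in> E \<Longrightarrow> c' (h ` e) = c e"
  shows "is_copy (h ` V) ((`) h ` E) c' k f (h ` X) = is_copy V E c k f X"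
proof -
  have adj: "{h x, h y} \<in> (`) h ` E \<longleftrightarrow> {x, y} \<in> E" for x y
  proof -
    have "{h x, h y} = h ` {x,y}" by simp
    moreover have "h ` {x,y} \<in> (`) h ` E \<longleftrightarrow> {x, y} \<in> E"
    proof
      assume "h ` {x,y} \<in> (`) h ` E"
      then obtain e where "e \<in> E" "h ` {x,y} = h ` e" by blast
      then show "{x,y} \<in> E" using assms(1) inj_image_eq_iff by metis
    qed blast
    ultimately show ?thesis by simp
  qed
  have hne: "h x \<noteq> h y \<longleftrightarrow> x \<noteq> y" for x y using assms(1) by (meson injD)
  have A: "(\<forall>x\<in>h ` X. \<forall>y\<in>h ` X. x \<noteq> y \<longrightarrow> {x, y} \<in> (`) h ` E) \<longleftrightarrow> (\<forall>x\<in>X. \<forall>y\<in>X. x \<noteq> y \<longrightarrow> {x, y} \<in> E)"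
    using adj hne by auto
  have cv: "c' {h x, h y} = c {x, y}" if "{x, y} \<in> E" for x y
    using assms(2)[OF that] by simp
  have sub: "h ` X \<subseteq> h ` V \<longleftrightarrow> X \<subseteq> V" using assms(1) by (simp add: inj_image_subset_iff)
  have cd: "card (h ` X) = card X" using assms(1) by (simp add: card_image inj_on_subset)
  have bij1: "bij_betw (\<phi> \<circ> h) X K" if "bij_betw \<phi> (h ` X) K" for \<phi> K
    using bij_betw_trans[OF bij_betw_imageI[OF inj_on_subset[OF assms(1) subset_UNIV] refl] that] .
  have ihX: "bij_betw (inv h) (h ` X) X"
  proof -
    have i: "inj_on h X" using inj_on_subset[OF assms(1) subset_UNIV] .
    have b: "bij_betw (inv_into X h) (h ` X) X"
      using bij_betw_inv_into[OF bij_betw_imageI[OF i refl]] .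
    have "inv_into X h y = inv h y" if "y \<in> h ` X" for y
      using that i assms(1) by auto
    then show ?thesis using b bij_betw_cong by blast
  qed
  have bij2: "bij_betw (\<phi> \<circ> inv h) (h ` X) K" if "bij_betw \<phi> X K" for \<phi> K
    using ihX that bij_betw_trans by blast
  have ih: "(\<phi> \<circ> inv h) \<circ> h = \<phi>" for \<phi> :: "'a \<Rightarrow> nat" using assms(1) by auto
  show ?thesis
  proof (cases "\<forall>x\<in>X. \<forall>y\<in>X. x \<noteq> y \<longrightarrow> {x, y} \<in> E")
    case False
    then show ?thesis unfolding is_copy_alt A by blast
  next
    case True
    have P: "pat c' f \<phi> (h ` X) = pat c f (\<phi> \<circ> h) X" for \<phi>
      by (rule pat_image[OF assms(1)]) (use True cv in blast)
    have "(\<exists>\<phi>. bij_betw \<phi> (h ` X) {0..<k} \<and> pat c' f \<phi> (h ` X)) = (\<exists>\<phi>. bij_betw \<phi> X {0..<k} \<and> pat c f \<phi> X)"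
    proof
      assume "\<exists>\<phi>. bij_betw \<phi> (h ` X) {0..<k} \<and> pat c' f \<phi> (h ` X)"
      then obtain \<phi> where "bij_betw \<phi> (h ` X) {0..<k}" "pat c' f \<phi> (h ` X)" by blast
      then show "\<exists>\<phi>. bij_betw \<phi> X {0..<k} \<and> pat c f \<phi> X" using bij1 P by blast
    next
      assume "\<exists>\<phi>. bij_betw \<phi> X {0..<k} \<and> pat c f \<phi> X"
      then obtain \<phi> where ph: "bij_betw \<phi> X {0..<k}" "pat c f \<phi> X" by blast
      have "pat c' f (\<phi> \<circ> inv h) (h ` X)" using P[of "\<phi> \<circ> inv h"] ph(2) ih by simp
      then show "\<exists>\<phi>. bij_betw \<phi> (h ` X) {0..<k} \<and> pat c' f \<phi> (h ` X)" using bij2 ph(1) by blast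
    qed
    then show ?thesis unfolding is_copy_alt A sub cd by blast
  qed
qed

lemma pattern_free_image:
  assumes "inj h" "\<And>e. e \<in> E \<Longrightarrow> c' (h ` e) = c e"
  shows "pattern_free (h ` V) ((`) h ` E) c' k f = pattern_free V E c k f"
proof -
  have "(\<exists>X'. is_copy (h ` V) ((`) h ` E) c' k f X') = (\<exists>X. is_copy V E c k f X)"
  proof
    assume "\<exists>X'. is_copy (h ` V) ((`) h ` E) c' k f X'"
    then obtain X' where X': "is_copy (h ` V) ((`) h ` E) c' k f X'" by blast
    then have "X' \<subseteq> h ` V" unfolding is_copy_def by blast
    then have "X' = h ` (h -` X')" by blast
    then show "\<exists>X. is_copy V E c k f X" using X' is_copy_image[of h E c' c V k f "h -` X'", OF assms] by metis
  next
    assume "\<exists>X. is_copy V E c k f X"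
    then show "\<exists>X'. is_copy (h ` V) ((`) h ` E) c' k f X'" using is_copy_image[of h E c' c V k f, OF assms] by blast
  qed
  then show ?thesis unfolding pattern_free_def by blast
qed



definition sub_edges :: "'a set set \<Rightarrow> 'a set \<Rightarrow> 'a set set" where
  "sub_edges E W = {e\<in>E. e \<subseteq> W}"
definition star :: "'a set set \<Rightarrow> 'a \<Rightarrow> 'a set set" where
  "star E t = {e\<in>E. t \<in> e}"
definition merge :: "'a set set \<Rightarrow> ('a set \<Rightarrow> nat) \<Rightarrow> ('a set \<Rightarrow> nat) \<Rightarrow> 'a set \<Rightarrow> nat" where
  "merge EA cA d = (\<lambda>e. if e \<in> EA then cA e else d e)"
definition Dset :: "nat \<Rightarrow> nat \<Rightarrow> (nat set \<Rightarrow> nat) \<Rightarrow> 'a set \<Rightarrow> 'a set set \<Rightarrow> 'a set set \<Rightarrow> ('a set \<Rightarrow> nat) \<Rightarrow> ('a set \<Rightarrow> nat) set" where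
  "Dset r k f W EA St cA = {d \<in> colorings r St. pattern_free W (EA \<union> St) (merge EA cA d) k f}"
definition FA :: "nat \<Rightarrow> nat \<Rightarrow> (nat set \<Rightarrow> nat) \<Rightarrow> 'a set \<Rightarrow> 'a set set \<Rightarrow> ('a set \<Rightarrow> nat) set" where
  "FA r k f A EA = {cA \<in> colorings r EA. pattern_free A EA cA k f}"

lemma two_elem:
  assumes "card e = 2" "x \<in> e" "y \<in> e" "x \<noteq> y"
  shows "e = {x, y}"
proof -
  obtain a b where "e = {a,b}" "a \<noteq> b" using assms(1) card_2_iff by metis
  then show ?thesis using assms by auto
qed

lemma colorings_finite: "finite E \<Longrightarrow> finite (colorings r E)"
  unfolding colorings_def by (intro finite_PiE) auto

lemma master:
  assumes sg: "simple_graph V E" and TV: "T \<subseteq> V" and ind: "indep_set E T"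
  shows "count_free r k f V E =
    (\<Sum>cA \<in> FA r k f (V - T) (sub_edges E (V - T)).
       \<Prod>t\<in>T. card (Dset r k f (V - T \<union> {t}) (sub_edges E (V - T)) (star E t) cA))"
proof -
  define A where "A = V - T"
  define EA where "EA = sub_edges E A"
  have finV: "finite V" using sg unfolding simple_graph_def by blast
  have eV: "e \<subseteq> V" "card e = 2" if "e \<in> E" for e using sg that unfolding simple_graph_def by auto
  have finE: "finite E"
  proof -
    have "E \<subseteq> Pow V" using eV by blast
    then show ?thesis using finite_subset finite_Pow_iff[THEN iffD2, OF finV] by auto
  qed
  have ind': "{x, y} \<notin> E" if "x \<in> T" "y \<in> T" for x y using ind that unfolding indep_set_def by blast
  have uniq: "t = t'" if "e \<in> E" "t \<in> T" "t' \<in> T" "t \<in> e" "t' \<in> e" for e t t'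
  proof (rule ccontr)
    assume "t \<noteq> t'"
    then have "e = {t, t'}" by (rule two_elem[OF eV(2)[OF that(1)] that(4,5)])
    then show False using ind' that by blast
  qed
  have EAE: "EA \<subseteq> E" unfolding EA_def sub_edges_def by blast
  have stE: "star E t \<subseteq> E" for t unfolding star_def by blast
  have cover: "\<exists>t\<in>T. e \<in> star E t" if "e \<in> E" "e \<notin> EA" for e
  proof -
    have "\<not> e \<subseteq> A" using that unfolding EA_def sub_edges_def by blast
    then obtain x where "x \<in> e" "x \<notin> A" by blast
    then have "x \<in> T" using eV(1)[OF that(1)] unfolding A_def by blast
    then show ?thesis using \<open>x \<in> e\<close> that(1) unfolding star_def by blast
  qed
  have disj: "e \<notin> EA" if "t \<in> T" "e \<in> star E t" for t e
    using that unfolding EA_def sub_edges_def star_def A_def by blast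
  have loc: "sub_edges E (A \<union> {t}) = EA \<union> star E t" if "t \<in> T" for t
  proof
    show "sub_edges E (A \<union> {t}) \<subseteq> EA \<union> star E t"
      unfolding sub_edges_def EA_def star_def by blast
    show "EA \<union> star E t \<subseteq> sub_edges E (A \<union> {t})"
    proof
      fix e assume "e \<in> EA \<union> star E t"
      then show "e \<in> sub_edges E (A \<union> {t})"
      proof
        assume "e \<in> EA" then show ?thesis unfolding EA_def sub_edges_def by blast
      next
        assume es: "e \<in> star E t"
        then have eE: "e \<in> E" and te: "t \<in> e" unfolding star_def by auto
        have "x \<in> A \<union> {t}" if "x \<in> e" for x
        proof (cases "x = t")
          case False
          then have "e = {t, x}" using two_elem[OF eV(2)[OF eE] te that] by auto
          then have "x \<notin> T" using ind' \<open>t \<in> T\<close> eE by blast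
          then show ?thesis using eV(1)[OF eE] that unfolding A_def by blast
        qed simp
        then show ?thesis using eE unfolding sub_edges_def by blast
      qed
    qed
  qed
  have AV: "A \<subseteq> V" and AtV: "t \<in> T \<Longrightarrow> A \<union> {t} \<subseteq> V" for t unfolding A_def using TV by auto
  have pfree: "pattern_free V E c k f \<longleftrightarrow>
      pattern_free A EA c k f \<and> (\<forall>t\<in>T. pattern_free (A \<union> {t}) (EA \<union> star E t) c k f)" for c
  proof
    assume P: "pattern_free V E c k f"
    show "pattern_free A EA c k f \<and> (\<forall>t\<in>T. pattern_free (A \<union> {t}) (EA \<union> star E t) c k f)"
    proof (intro conjI ballI)
      show "pattern_free A EA c k f"
        unfolding pattern_free_def
      proof
        assume "\<exists>X. is_copy A EA c k f X"
        then obtain X where X: "is_copy A EA c k f X" by blast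
        then have "X \<subseteq> A" unfolding is_copy_alt by blast
        then have "is_copy V E c k f X" using X is_copy_sub[OF _ AV] unfolding EA_def sub_edges_def by blast
        then show False using P unfolding pattern_free_def by blast
      qed
      fix t assume t: "t \<in> T"
      show "pattern_free (A \<union> {t}) (EA \<union> star E t) c k f"
        unfolding pattern_free_def
      proof
        assume "\<exists>X. is_copy (A \<union> {t}) (EA \<union> star E t) c k f X"
        then obtain X where X: "is_copy (A \<union> {t}) (EA \<union> star E t) c k f X" by blast
        then have "X \<subseteq> A \<union> {t}" unfolding is_copy_alt by blast
        then have "is_copy V E c k f X" using X is_copy_sub[OF _ AtV[OF t]] loc[OF t]
          unfolding sub_edges_def by simp
        then show False using P unfolding pattern_free_def by blast
      qed
    qed
  next
    assume P: "pattern_free A EA c k f \<and> (\<forall>t\<in>T. pattern_free (A \<union> {t}) (EA \<union> star E t) c k f)"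
    show "pattern_free V E c k f" unfolding pattern_free_def
    proof
      assume "\<exists>X. is_copy V E c k f X"
      then obtain X where X: "is_copy V E c k f X" by blast
      then have XV: "X \<subseteq> V" and adj: "\<forall>x\<in>X. \<forall>y\<in>X. x \<noteq> y \<longrightarrow> {x, y} \<in> E"
        unfolding is_copy_alt by blast+
      show False
      proof (cases "X \<inter> T = {}")
        case True
        then have "X \<subseteq> A" using XV unfolding A_def by blast
        then have "is_copy A EA c k f X" using X is_copy_sub[OF _ AV] unfolding EA_def sub_edges_def by blast
        then show False using P unfolding pattern_free_def by blast
      next
        case False
        then obtain t where t: "t \<in> X" "t \<in> T" by blast
        have "X \<subseteq> A \<union> {t}"
        proof
          fix x assume x: "x \<in> X"
          show "x \<in> A \<union> {t}"
          proof (cases "x = t")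
            case False
            then have "{x, t} \<in> E" using adj x t by blast
            then have "x \<notin> T" using ind' t(2) by blast
            then show ?thesis using XV x unfolding A_def by blast
          qed simp
        qed
        then have "is_copy (A \<union> {t}) (EA \<union> star E t) c k f X" using X is_copy_sub[OF _ AtV[OF t(2)]] loc[OF t(2)]
          unfolding sub_edges_def by simp
        then show False using P t(2) unfolding pattern_free_def by blast
      qed
    qed
  qed
  define tof where "tof e = (THE t. t \<in> T \<and> e \<in> star E t)" for e
  have tof: "tof e = t" if "t \<in> T" "e \<in> star E t" for t e
    unfolding tof_def
  proof (rule the_equality)
    show "t \<in> T \<and> e \<in> star E t" using that by blast
    show "t' = t" if "t' \<in> T \<and> e \<in> star E t'" for t'
      using uniq[of e t' t] that \<open>t \<in> T\<close> \<open>e \<in> star E t\<close> unfolding star_def by blast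
  qed
  define C where "C = {c \<in> colorings r E. pattern_free V E c k f}"
  define Tg where "Tg = Sigma (FA r k f A EA) (\<lambda>cA. PiE T (\<lambda>t. Dset r k f (A \<union> {t}) EA (star E t) cA))"
  define \<Phi> where "\<Phi> c = (restrict c EA, \<lambda>t\<in>T. restrict c (star E t))" for c :: "'a set \<Rightarrow> nat"
  define \<Psi> where "\<Psi> p = (\<lambda>e. if e \<in> EA then fst p e else if e \<in> E then snd p (tof e) e else undefined)"
    for p :: "('a set \<Rightarrow> nat) \<times> ('a \<Rightarrow> 'a set \<Rightarrow> nat)"
  have merge_eq: "merge EA (restrict c EA) (restrict c (star E t)) e = c e" if "e \<in> EA \<union> star E t" for c t e
    using that unfolding merge_def by auto
  have bij: "bij_betw \<Phi> C Tg"
  proof (rule bij_betw_byWitness[where f' = \<Psi>])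
    show "\<forall>c\<in>C. \<Psi> (\<Phi> c) = c"
    proof
      fix c assume "c \<in> C"
      then have cE: "c \<in> E \<rightarrow>\<^sub>E {1..r}" unfolding C_def colorings_def by blast
      show "\<Psi> (\<Phi> c) = c"
      proof
        fix e
        show "\<Psi> (\<Phi> c) e = c e"
        proof (cases "e \<in> EA")
          case False
          show ?thesis
          proof (cases "e \<in> E")
            case True
            then obtain t where t: "t \<in> T" "e \<in> star E t" using cover False by blast
            have "\<Psi> (\<Phi> c) e = snd (\<Phi> c) (tof e) e" using False True unfolding \<Psi>_def by simp
            also have "\<dots> = c e" using t unfolding tof[OF t] \<Phi>_def by simp
            finally show ?thesis .
          next
            case F2: False
            have "\<Psi> (\<Phi> c) e = undefined" using False F2 unfolding \<Psi>_def by simp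
            moreover have "c e = undefined" using cE F2 by (rule PiE_arb)
            ultimately show ?thesis by simp
          qed
        qed (simp add: \<Psi>_def \<Phi>_def)
      qed
    qed
    show "\<forall>p\<in>Tg. \<Phi> (\<Psi> p) = p"
    proof
      fix p assume "p \<in> Tg"
      then obtain cA ds where p: "p = (cA, ds)" and cA: "cA \<in> FA r k f A EA"
        and ds: "ds \<in> PiE T (\<lambda>t. Dset r k f (A \<union> {t}) EA (star E t) cA)"
        unfolding Tg_def by blast
      have cAE: "cA \<in> EA \<rightarrow>\<^sub>E {1..r}" using cA unfolding FA_def colorings_def by blast
      have dsE: "ds t \<in> star E t \<rightarrow>\<^sub>E {1..r}" if "t \<in> T" for t
        using ds that unfolding Dset_def colorings_def by blast
      have 1: "restrict (\<Psi> p) EA = cA"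
      proof
        fix e show "restrict (\<Psi> p) EA e = cA e"
        proof (cases "e \<in> EA")
          case True then show ?thesis unfolding \<Psi>_def p by simp
        next
          case False
          then have "cA e = undefined" using cAE by (rule_tac PiE_arb)
          then show ?thesis using False by simp
        qed
      qed
      have 2: "(\<lambda>t\<in>T. restrict (\<Psi> p) (star E t)) = ds"
      proof
        fix t show "(\<lambda>t\<in>T. restrict (\<Psi> p) (star E t)) t = ds t"
        proof (cases "t \<in> T")
          case True
          show ?thesis
          proof
            fix e
            show "(\<lambda>t\<in>T. restrict (\<Psi> p) (star E t)) t e = ds t e"
            proof (cases "e \<in> star E t")
              case True
              have "e \<in> E" "e \<notin> EA" using disj[OF \<open>t \<in> T\<close> True] True stE by auto
              then have "\<Psi> p e = ds (tof e) e" unfolding \<Psi>_def p by simp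
              then show ?thesis using \<open>t \<in> T\<close> True unfolding tof[OF \<open>t \<in> T\<close> True] by simp
            next
              case False
              have "ds t e = undefined" using dsE[OF \<open>t \<in> T\<close>] False by (rule PiE_arb)
              then show ?thesis using \<open>t \<in> T\<close> False by simp
            qed
          qed
        next
          case False
          have "ds t = undefined" using ds False by (rule PiE_arb)
          then show ?thesis using False by simp
        qed
      qed
      show "\<Phi> (\<Psi> p) = p" unfolding \<Phi>_def using 1 2 p by simp
    qed
    show "\<Phi> ` C \<subseteq> Tg"
    proof
      fix q assume "q \<in> \<Phi> ` C"
      then obtain c where c: "c \<in> C" "q = \<Phi> c" by blast
      have cE: "c \<in> E \<rightarrow>\<^sub>E {1..r}" and P: "pattern_free V E c k f" using c unfolding C_def colorings_def by blast+
      have P2: "pattern_free A EA c k f" "\<And>t. t\<in>T \<Longrightarrow> pattern_free (A \<union> {t}) (EA \<union> star E t) c k f"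
        using P pfree by blast+
      have "restrict c EA \<in> FA r k f A EA"
        unfolding FA_def colorings_def
      proof (intro CollectI conjI)
        show "restrict c EA \<in> EA \<rightarrow>\<^sub>E {1..r}" using cE EAE by auto
        show "pattern_free A EA (restrict c EA) k f"
          using P2(1) pattern_free_cong[of EA "restrict c EA" c] by simp
      qed
      moreover have "(\<lambda>t\<in>T. restrict c (star E t)) \<in> PiE T (\<lambda>t. Dset r k f (A \<union> {t}) EA (star E t) (restrict c EA))"
      proof
        fix t assume t: "t \<in> T"
        show "(\<lambda>t\<in>T. restrict c (star E t)) t \<in> Dset r k f (A \<union> {t}) EA (star E t) (restrict c EA)"
          unfolding Dset_def colorings_def
        proof (intro CollectI conjI)
          show "(\<lambda>t\<in>T. restrict c (star E t)) t \<in> star E t \<rightarrow>\<^sub>E {1..r}" using cE stE t by auto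
          have "pattern_free (A \<union> {t}) (EA \<union> star E t) (merge EA (restrict c EA) (restrict c (star E t))) k f
              = pattern_free (A \<union> {t}) (EA \<union> star E t) c k f"
            by (rule pattern_free_cong) (rule merge_eq)
          then show "pattern_free (A \<union> {t}) (EA \<union> star E t) (merge EA (restrict c EA) ((\<lambda>t\<in>T. restrict c (star E t)) t)) k f"
            using P2(2)[OF t] t by simp
        qed
      qed auto
      ultimately show "q \<in> Tg" unfolding Tg_def c(2) \<Phi>_def by blast
    qed
    show "\<Psi> ` Tg \<subseteq> C"
    proof
      fix c assume "c \<in> \<Psi> ` Tg"
      then obtain p where pT: "p \<in> Tg" and c: "c = \<Psi> p" by blast
      then obtain cA ds where p: "p = (cA, ds)" and cA: "cA \<in> FA r k f A EA"
        and ds: "ds \<in> PiE T (\<lambda>t. Dset r k f (A \<union> {t}) EA (star E t) cA)"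
        unfolding Tg_def by blast
      have cAE: "cA \<in> EA \<rightarrow>\<^sub>E {1..r}" and cAP: "pattern_free A EA cA k f" using cA unfolding FA_def colorings_def by blast+
      have dsE: "ds t \<in> star E t \<rightarrow>\<^sub>E {1..r}" and dsP: "pattern_free (A \<union> {t}) (EA \<union> star E t) (merge EA cA (ds t)) k f"
        if "t \<in> T" for t
        using ds that unfolding Dset_def colorings_def by blast+
      have "c \<in> E \<rightarrow>\<^sub>E {1..r}"
      proof
        fix e assume eE: "e \<in> E"
        show "c e \<in> {1..r}"
        proof (cases "e \<in> EA")
          case True then show ?thesis using cAE unfolding c \<Psi>_def p by auto
        next
          case False
          then obtain t where t: "t \<in> T" "e \<in> star E t" using cover eE by blast
          then show ?thesis using dsE[OF t(1)] False eE tof[OF t] unfolding c \<Psi>_def p by auto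
        qed
      next
        fix e assume "e \<notin> E"
        then show "c e = undefined" using EAE unfolding c \<Psi>_def p by auto
      qed
      moreover have "pattern_free V E c k f"
        unfolding pfree
      proof (intro conjI ballI)
        show "pattern_free A EA c k f"
          using cAP pattern_free_cong[of EA c cA] unfolding c \<Psi>_def p by simp
        fix t assume t: "t \<in> T"
        have "c e = merge EA cA (ds t) e" if "e \<in> EA \<union> star E t" for e
        proof (cases "e \<in> EA")
          case False
          then have "e \<in> star E t" using that by blast
          then show ?thesis using False tof[OF t] stE unfolding c \<Psi>_def p merge_def by auto
        qed (simp add: c \<Psi>_def p merge_def)
        then show "pattern_free (A \<union> {t}) (EA \<union> star E t) c k f"
          using dsP[OF t] pattern_free_cong by metis
      qed
      ultimately show "c \<in> C" unfolding C_def colorings_def by blast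
    qed
  qed
  have "count_free r k f V E = card C" unfolding count_free_def C_def by simp
  also have "\<dots> = card Tg" using bij by (rule bij_betw_same_card)
  also have "\<dots> = (\<Sum>cA \<in> FA r k f A EA. card (PiE T (\<lambda>t. Dset r k f (A \<union> {t}) EA (star E t) cA)))"
    unfolding Tg_def
  proof (rule card_SigmaI)
    have "finite EA" using finE EAE finite_subset by blast
    then show "finite (FA r k f A EA)" unfolding FA_def
      by (rule finite_subset[OF _ colorings_finite, rotated]) auto
    have finT: "finite T" using TV finV finite_subset by blast
    show "\<forall>a\<in>FA r k f A EA. finite (PiE T (\<lambda>t. Dset r k f (A \<union> {t}) EA (star E t) a))"
    proof
      fix a show "finite (PiE T (\<lambda>t. Dset r k f (A \<union> {t}) EA (star E t) a))"
      proof (rule finite_PiE[OF finT])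
        fix t
        have "finite (star E t)" using finE stE finite_subset by blast
        then show "finite (Dset r k f (A \<union> {t}) EA (star E t) a)"
          unfolding Dset_def by (rule finite_subset[OF _ colorings_finite, rotated]) auto
      qed
    qed
  qed
  also have "\<dots> = (\<Sum>cA \<in> FA r k f A EA. \<Prod>t\<in>T. card (Dset r k f (A \<union> {t}) EA (star E t) cA))"
  proof -
    have finT: "finite T" using TV finV finite_subset by blast
    show ?thesis by (simp add: card_PiE[OF finT])
  qed
  finally show ?thesis unfolding A_def EA_def .
qed



lemma amgm_nat:
  fixes x :: "'b \<Rightarrow> nat"
  assumes "finite S" "S \<noteq> {}"
  shows "card S * (\<Prod>u\<in>S. x u) \<le> (\<Sum>u\<in>S. x u ^ card S)"
proof -
  define n where "n = card S"
  have n0: "n > 0" unfolding n_def using assms by (simp add: card_gt_0_iff)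
  define P where "P = (\<Prod>u\<in>S. real (x u))"
  have P0: "P \<ge> 0" unfolding P_def by (simp add: prod_nonneg)
  have am: "(\<Sum>i\<in>S. real (x i ^ n) / card S) \<ge> (\<Prod>i\<in>S. real (x i ^ n)) powr (1 / card S)"
    by (rule arith_geom_mean[OF assms]) simp
  have "(\<Prod>i\<in>S. real (x i ^ n)) = P ^ n" unfolding P_def by (simp add: prod_power_distrib)
  moreover have "(P ^ n) powr (1 / n) = P"
  proof (cases "P = 0")
    case True then show ?thesis using n0 by simp
  next
    case False
    then have "P > 0" using P0 by simp
    then have "(P ^ n) powr (1 / n) = (P powr n) powr (1/n)" by (simp add: powr_realpow)
    also have "\<dots> = P" using n0 \<open>P > 0\<close> by (simp add: powr_powr)
    finally show ?thesis .
  qed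
  ultimately have "(\<Sum>i\<in>S. real (x i ^ n) / n) \<ge> P" using am n_def by simp
  then have "(\<Sum>i\<in>S. real (x i ^ n)) / n \<ge> P" by (simp add: sum_divide_distrib)
  then have "(\<Sum>i\<in>S. real (x i ^ n)) \<ge> n * P" using n0 by (simp add: field_simps)
  then have "real (\<Sum>i\<in>S. x i ^ n) \<ge> real (n * (\<Prod>u\<in>S. x u))" unfolding P_def by simp
  then show ?thesis unfolding n_def by linarith
qed

lemma Dset_bij:
  assumes inj: "inj h" and EA: "(`) h ` EA1 = EA2" and St: "(`) h ` St1 = St2" and W: "h ` W1 = W2"
    and dis: "EA1 \<inter> St1 = {}" and cA: "\<And>e. e \<in> EA1 \<Longrightarrow> cA2 (h ` e) = cA1 e"
  shows "bij_betw (\<lambda>d. restrict (\<lambda>e'. d (h -` e')) St2) (Dset r k f W1 EA1 St1 cA1) (Dset r k f W2 EA2 St2 cA2)"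
proof -
  define \<rho> where "\<rho> d = restrict (\<lambda>e'. d (h -` e')) St2" for d :: "'a set \<Rightarrow> nat"
  define \<rho>' where "\<rho>' d' = restrict (\<lambda>e. d' (h ` e)) St1" for d' :: "'b set \<Rightarrow> nat"
  have vi: "h -` (h ` e) = e" for e using inj by (simp add: inj_vimage_image_eq)
  have hi: "h ` e \<in> (`) h ` E \<longleftrightarrow> e \<in> E" for e E
    using inj by (metis image_eqI imageE inj_image_eq_iff)
  have rv: "\<rho> d (h ` e) = d e" if "e \<in> St1" for d e
    using that St vi unfolding \<rho>_def by auto
  have key: "pattern_free W2 (EA2 \<union> St2) (merge EA2 cA2 (\<rho> d)) k f = pattern_free W1 (EA1 \<union> St1) (merge EA1 cA1 d) k f" for d
  proof -
    have e: "EA2 \<union> St2 = (`) h ` (EA1 \<union> St1)" using EA St by (simp add: image_Un)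
    show ?thesis unfolding e W[symmetric]
    proof (rule pattern_free_image[OF inj])
      fix e assume "e \<in> EA1 \<union> St1"
      then show "merge EA2 cA2 (\<rho> d) (h ` e) = merge EA1 cA1 d e"
      proof
        assume "e \<in> EA1"
        have "h ` e \<in> EA2" using EA \<open>e \<in> EA1\<close> by blast
        then show ?thesis using cA[OF \<open>e \<in> EA1\<close>] \<open>e \<in> EA1\<close> unfolding merge_def by simp
      next
        assume eS: "e \<in> St1"
        then have "e \<notin> EA1" using dis by blast
        then have "h ` e \<notin> EA2" using hi[of e EA1] EA by simp
        then show ?thesis using \<open>e \<notin> EA1\<close> rv[OF eS] unfolding merge_def by simp
      qed
    qed
  qed
  show ?thesis unfolding \<rho>_def[symmetric]
  proof (rule bij_betw_byWitness[where f' = \<rho>'])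
    show "\<forall>d\<in>Dset r k f W1 EA1 St1 cA1. \<rho>' (\<rho> d) = d"
    proof
      fix d assume "d \<in> Dset r k f W1 EA1 St1 cA1"
      then have dE: "d \<in> St1 \<rightarrow>\<^sub>E {1..r}" unfolding Dset_def colorings_def by blast
      show "\<rho>' (\<rho> d) = d"
      proof
        fix e show "\<rho>' (\<rho> d) e = d e"
        proof (cases "e \<in> St1")
          case True then show ?thesis unfolding \<rho>'_def using rv[OF True] by simp
        next
          case False
          have "d e = undefined" using dE False by (rule PiE_arb)
          then show ?thesis unfolding \<rho>'_def using False by simp
        qed
      qed
    qed
    show "\<forall>d\<in>Dset r k f W2 EA2 St2 cA2. \<rho> (\<rho>' d) = d"
    proof
      fix d assume "d \<in> Dset r k f W2 EA2 St2 cA2"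
      then have dE: "d \<in> St2 \<rightarrow>\<^sub>E {1..r}" unfolding Dset_def colorings_def by blast
      show "\<rho> (\<rho>' d) = d"
      proof
        fix e' show "\<rho> (\<rho>' d) e' = d e'"
        proof (cases "e' \<in> St2")
          case True
          then obtain e where e: "e \<in> St1" "e' = h ` e" using St by blast
          then show ?thesis unfolding \<rho>_def \<rho>'_def using True vi by simp
        next
          case False
          have "d e' = undefined" using dE False by (rule PiE_arb)
          then show ?thesis unfolding \<rho>_def using False by simp
        qed
      qed
    qed
    have rc: "\<rho> d \<in> colorings r St2" if "d \<in> colorings r St1" for d
      unfolding colorings_def
    proof
      fix e' assume "e' \<in> St2"
      then obtain e where e: "e \<in> St1" "e' = h ` e" using St by blast
      then show "\<rho> d e' \<in> {1..r}" using rv that unfolding colorings_def by auto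
    next
      fix e' assume "e' \<notin> St2" then show "\<rho> d e' = undefined" unfolding \<rho>_def by simp
    qed
    have rc': "\<rho>' d \<in> colorings r St1" if "d \<in> colorings r St2" for d
      unfolding colorings_def
    proof
      fix e assume "e \<in> St1"
      then have "h ` e \<in> St2" using St by blast
      then show "\<rho>' d e \<in> {1..r}" using that \<open>e \<in> St1\<close> unfolding colorings_def \<rho>'_def by auto
    next
      fix e assume "e \<notin> St1" then show "\<rho>' d e = undefined" unfolding \<rho>'_def by simp
    qed
    show "\<rho> ` Dset r k f W1 EA1 St1 cA1 \<subseteq> Dset r k f W2 EA2 St2 cA2"
      using rc key unfolding Dset_def by auto
    show "\<rho>' ` Dset r k f W2 EA2 St2 cA2 \<subseteq> Dset r k f W1 EA1 St1 cA1"
    proof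
      fix d assume "d \<in> \<rho>' ` Dset r k f W2 EA2 St2 cA2"
      then obtain d' where d': "d' \<in> Dset r k f W2 EA2 St2 cA2" "d = \<rho>' d'" by blast
      have inv: "\<rho> (\<rho>' d') = d'"
      proof
        fix e' show "\<rho> (\<rho>' d') e' = d' e'"
        proof (cases "e' \<in> St2")
          case True
          then obtain e where e: "e \<in> St1" "e' = h ` e" using St by blast
          then show ?thesis unfolding \<rho>_def \<rho>'_def using True vi by simp
        next
          case False
          have "d' \<in> St2 \<rightarrow>\<^sub>E {1..r}" using d'(1) unfolding Dset_def colorings_def by blast
          then have "d' e' = undefined" using False by (rule PiE_arb)
          then show ?thesis unfolding \<rho>_def using False by simp
        qed
      qed
      have "pattern_free W2 (EA2 \<union> St2) (merge EA2 cA2 d') k f" using d'(1) unfolding Dset_def by blast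
      then have "pattern_free W2 (EA2 \<union> St2) (merge EA2 cA2 (\<rho> d)) k f" using inv d'(2) by simp
      then have "pattern_free W1 (EA1 \<union> St1) (merge EA1 cA1 d) k f"
        using key[of d] by simp
      moreover have "d \<in> colorings r St1" using rc' d' unfolding Dset_def by blast
      ultimately show "d \<in> Dset r k f W1 EA1 St1 cA1" unfolding Dset_def by blast
    qed
  qed
qed

lemma rho_val:
  assumes "inj h" "(`) h ` St1 = St2" "e \<in> St1"
  shows "restrict (\<lambda>e'. d (h -` e')) St2 (h ` e) = d e"
  using assms by (auto simp: inj_vimage_image_eq)

lemma FA_Dset: "FA r k f A EA = Dset r k f A {} EA cA"
proof -
  have "merge {} cA d = d" for d unfolding merge_def by simp
  then show ?thesis unfolding FA_def Dset_def by simp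
qed



lemma twin_count:
  assumes sg: "simple_graph V E" and SV: "S \<subseteq> V" and ind: "indep_set E S" and vS: "v \<in> S"
  shows "count_free r k f (twin_vertices V S) (twin_edges V E S v) =
    (\<Sum>cA \<in> FA r k f (V - S) (sub_edges E (V - S)).
        card (Dset r k f (V - S \<union> {v}) (sub_edges E (V - S)) (star E v) cA) ^ card S)"
proof -
  define A where "A = V - S"
  define EA where "EA = sub_edges E A"
  define s where "s = card S"
  define N where "N = nbhd E v"
  define Vt where "Vt = twin_vertices V S"
  define Et where "Et = twin_edges V E S v"
  define Tt :: "('a + nat) set" where "Tt = Inr ` {0..<s}"
  have finV: "finite V" using sg unfolding simple_graph_def by blast
  have eV: "e \<subseteq> V" "card e = 2" if "e \<in> E" for e using sg that unfolding simple_graph_def by auto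
  have vA: "v \<notin> A" unfolding A_def using vS by blast
  have NA: "N \<subseteq> A"
  proof
    fix u assume "u \<in> N"
    then have uv: "{u, v} \<in> E" unfolding N_def nbhd_def by simp
    have "u \<noteq> v"
    proof
      assume "u = v"
      then have "card {u, v} = 1" by simp
      then show False using eV(2)[OF uv] by simp
    qed
    moreover have "u \<in> V" using eV(1)[OF uv] by blast
    moreover have "u \<notin> S" using ind vS uv unfolding indep_set_def by blast
    ultimately show "u \<in> A" unfolding A_def by blast
  qed
  have Et_iff: "e \<in> Et \<longleftrightarrow> (\<exists>e0. e0 \<in> E \<and> e0 \<subseteq> A \<and> e = Inl ` e0) \<or> (\<exists>u i. u \<in> N \<and> i < s \<and> e = {Inl u, Inr i})" for e
    unfolding Et_def twin_edges_def A_def N_def s_def by blast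
  have Vt_eq: "Vt = Inl ` A \<union> Tt" unfolding Vt_def twin_vertices_def A_def Tt_def s_def by simp
  have VmT: "Vt - Tt = Inl ` A" unfolding Vt_eq Tt_def by blast
  have TtV: "Tt \<subseteq> Vt" unfolding Vt_eq by blast
  have sgt: "simple_graph Vt Et"
    unfolding simple_graph_def
  proof (rule conjI)
    show "finite Vt" unfolding Vt_eq Tt_def A_def using finV by simp
    show "\<forall>e\<in>Et. e \<subseteq> Vt \<and> card e = 2"
    proof
    fix e assume "e \<in> Et"
    then consider (a) e0 where "e0 \<in> E" "e0 \<subseteq> A" "e = Inl ` e0" | (b) u i where "u \<in> N" "i < s" "e = {Inl u, Inr i}"
      unfolding Et_iff by blast
    then show "e \<subseteq> Vt \<and> card e = 2"
    proof cases
      case a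
      have "card e = card e0" unfolding a(3) by (simp add: card_image)
      then show ?thesis using a eV(2)[OF a(1)] unfolding Vt_eq by auto
    next
      case b
      then show ?thesis using NA unfolding Vt_eq Tt_def by auto
    qed
    qed
  qed
  have indt: "indep_set Et Tt"
    unfolding indep_set_def
  proof (intro ballI)
    fix x y assume "x \<in> Tt" "y \<in> Tt"
    then obtain i j where ij: "x = Inr i" "y = Inr j" unfolding Tt_def by blast
    show "{x, y} \<notin> Et"
    proof
      assume "{x, y} \<in> Et"
      then consider (a) e0 where "{x, y} = Inl ` e0" | (b) u i' where "{x, y} = {Inl u, Inr i'}"
        unfolding Et_iff by blast
      then show False
      proof cases
        case a
        have "x \<in> Inl ` e0" using a by blast
        then show False using ij by blast
      next
        case b
        have "Inl u \<in> {x, y}" using b by blast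
        then show False using ij by blast
      qed
    qed
  qed
  define EAt :: "('a + nat) set set" where "EAt = (`) Inl ` EA"
  have subT: "sub_edges Et (Vt - Tt) = EAt"
  proof
    show "sub_edges Et (Vt - Tt) \<subseteq> EAt"
    proof
      fix e assume e: "e \<in> sub_edges Et (Vt - Tt)"
      then have eEt: "e \<in> Et" and eA: "e \<subseteq> Inl ` A" unfolding sub_edges_def VmT by auto
      from eEt consider (a) e0 where "e0 \<in> E" "e0 \<subseteq> A" "e = Inl ` e0" | (b) u i where "u \<in> N" "i < s" "e = {Inl u, Inr i}"
        unfolding Et_iff by blast
      then show "e \<in> EAt"
      proof cases
        case a then show ?thesis unfolding EAt_def EA_def sub_edges_def by blast
      next
        case b
        then have "Inr i \<in> Inl ` A" using eA by blast
        then show ?thesis by blast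
      qed
    qed
    show "EAt \<subseteq> sub_edges Et (Vt - Tt)"
    proof
      fix e assume "e \<in> EAt"
      then obtain e0 where e0: "e0 \<in> E" "e0 \<subseteq> A" "e = Inl ` e0" unfolding EAt_def EA_def sub_edges_def by blast
      then have "e \<in> Et" unfolding Et_iff by blast
      then show "e \<in> sub_edges Et (Vt - Tt)" unfolding sub_edges_def VmT using e0 by blast
    qed
  qed
  have M: "count_free r k f Vt Et = (\<Sum>cA \<in> FA r k f (Inl ` A) EAt.
       \<Prod>t\<in>Tt. card (Dset r k f (Inl ` A \<union> {t}) EAt (star Et t) cA))"
    using master[OF sgt TtV indt, of r k f] unfolding VmT subT[unfolded VmT] .
  define \<tau> where "\<tau> cA = restrict (\<lambda>e'. cA (Inl -` e')) EAt" for cA :: "'a set \<Rightarrow> nat"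
  have injInl: "inj (Inl :: 'a \<Rightarrow> 'a + nat)" by simp
  have bij\<tau>: "bij_betw \<tau> (FA r k f A EA) (FA r k f (Inl ` A) EAt)"
    unfolding FA_Dset[of r k f A EA undefined] FA_Dset[of r k f "Inl ` A" EAt undefined] \<tau>_def
    by (rule Dset_bij[OF injInl]) (auto simp: EAt_def)
  have \<tau>val: "\<tau> cA (Inl ` e) = cA e" if "e \<in> EA" for cA e
    unfolding \<tau>_def by (rule rho_val[OF injInl]) (auto simp: EAt_def that)
  have star_v: "e \<in> star E v \<longleftrightarrow> (\<exists>u\<in>N. e = {u, v})" for e
  proof
    assume "e \<in> star E v"
    then have eE: "e \<in> E" and ve: "v \<in> e" unfolding star_def by auto
    obtain a b where ab: "e = {a, b}" "a \<noteq> b" using eV(2)[OF eE] card_2_iff by metis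
    then have "\<exists>u. e = {u, v}" using ve by blast
    then obtain u where "e = {u, v}" by blast
    then show "\<exists>u\<in>N. e = {u, v}" using eE unfolding N_def nbhd_def by blast
  next
    assume "\<exists>u\<in>N. e = {u, v}"
    then show "e \<in> star E v" unfolding N_def nbhd_def star_def by auto
  qed
  have star_t: "e \<in> star Et (Inr i) \<longleftrightarrow> (\<exists>u\<in>N. e = {Inl u, Inr i})" if "i < s" for e i
  proof
    assume "e \<in> star Et (Inr i)"
    then have eE: "e \<in> Et" and ie: "Inr i \<in> e" unfolding star_def by auto
    from eE consider (a) e0 where "e = Inl ` e0" | (b) u i' where "u \<in> N" "e = {Inl u, Inr i'}"
      unfolding Et_iff by blast
    then show "\<exists>u\<in>N. e = {Inl u, Inr i}"
    proof cases
      case a then show ?thesis using ie by blast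
    next
      case b
      then have "i' = i" using ie by blast
      then show ?thesis using b by blast
    qed
  next
    assume "\<exists>u\<in>N. e = {Inl u, Inr i}"
    then show "e \<in> star Et (Inr i)" unfolding star_def Et_iff using that by blast
  qed
  have gv: "card (Dset r k f (Inl ` A \<union> {Inr i}) EAt (star Et (Inr i)) (\<tau> cA)) =
            card (Dset r k f (A \<union> {v}) EA (star E v) cA)" if iS: "i < s" for i cA
  proof -
    define h where "h x = (if x = v then Inr i else Inl x)" for x
    have injh: "inj h" unfolding h_def by (rule injI) (auto split: if_splits)
    have hA: "h ` e = Inl ` e" if "e \<subseteq> A" for e
      using that vA unfolding h_def by (intro image_cong) auto
    have c1: "(`) h ` EA = EAt"
    proof -
      have "(`) h ` EA = (`) Inl ` EA"
        by (rule image_cong[OF refl]) (rule hA, simp add: EA_def sub_edges_def)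
      then show ?thesis unfolding EAt_def .
    qed
    have c2: "(`) h ` star E v = star Et (Inr i)"
    proof
      show "(`) h ` star E v \<subseteq> star Et (Inr i)"
      proof
        fix e' assume "e' \<in> (`) h ` star E v"
        then obtain e where e: "e \<in> star E v" "e' = h ` e" by blast
        then obtain u where u: "u \<in> N" "e = {u, v}" using star_v by blast
        have "u \<noteq> v" using u(1) NA vA by blast
        then have "h ` e = {Inl u, Inr i}" unfolding u(2) h_def by simp
        then show "e' \<in> star Et (Inr i)" using star_t[OF iS] u e by blast
      qed
      show "star Et (Inr i) \<subseteq> (`) h ` star E v"
      proof
        fix e' assume "e' \<in> star Et (Inr i)"
        then obtain u where u: "u \<in> N" "e' = {Inl u, Inr i}" using star_t[OF iS] by blast
        have "u \<noteq> v" using u(1) NA vA by blast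
        then have "h ` {u, v} = e'" unfolding u(2) h_def by simp
        moreover have "{u, v} \<in> star E v" using star_v u(1) by blast
        ultimately show "e' \<in> (`) h ` star E v" by blast
      qed
    qed
    have c3: "h ` (A \<union> {v}) = Inl ` A \<union> {Inr i}"
    proof -
      have "h ` (A \<union> {v}) = h ` A \<union> {h v}" by simp
      also have "\<dots> = Inl ` A \<union> {Inr i}" using hA[of A] by (simp add: h_def)
      finally show ?thesis .
    qed
    have c4: "EA \<inter> star E v = {}" using vA unfolding EA_def sub_edges_def star_def by blast
    have c5: "\<tau> cA (h ` e) = cA e" if "e \<in> EA" for e
    proof -
      have "e \<subseteq> A" using that unfolding EA_def sub_edges_def by blast
      then show ?thesis using hA \<tau>val[OF that] by simp
    qed
    show ?thesis
      by (rule bij_betw_same_card[OF Dset_bij[of h EA EAt "star E v" "star Et (Inr i)" "A \<union> {v}" "Inl ` A \<union> {Inr i}" "\<tau> cA" cA r k f, OF injh c1 c2 c3 c4 c5], symmetric])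
  qed
  have "count_free r k f Vt Et = (\<Sum>cA \<in> FA r k f A EA.
       \<Prod>t\<in>Tt. card (Dset r k f (Inl ` A \<union> {t}) EAt (star Et t) (\<tau> cA)))"
    unfolding M by (rule sum.reindex_bij_betw[OF bij\<tau>, symmetric])
  also have "\<dots> = (\<Sum>cA \<in> FA r k f A EA. card (Dset r k f (A \<union> {v}) EA (star E v) cA) ^ s)"
  proof (rule sum.cong[OF refl])
    fix cA
    have "(\<Prod>t\<in>Tt. card (Dset r k f (Inl ` A \<union> {t}) EAt (star Et t) (\<tau> cA)))
        = (\<Prod>i\<in>{0..<s}. card (Dset r k f (Inl ` A \<union> {Inr i}) EAt (star Et (Inr i)) (\<tau> cA)))"
      unfolding Tt_def by (subst prod.reindex) (simp_all add: inj_on_def)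
    also have "\<dots> = (\<Prod>i\<in>{0..<s}. card (Dset r k f (A \<union> {v}) EA (star E v) cA))"
      by (rule prod.cong[OF refl]) (rule gv, simp)
    also have "\<dots> = card (Dset r k f (A \<union> {v}) EA (star E v) cA) ^ s" by simp
    finally show "(\<Prod>t\<in>Tt. card (Dset r k f (Inl ` A \<union> {t}) EAt (star Et t) (\<tau> cA)))
        = card (Dset r k f (A \<union> {v}) EA (star E v) cA) ^ s" .
  qed
  finally show ?thesis unfolding Vt_def Et_def A_def EA_def s_def .
qed



theorem lemma2p7:
  fixes V :: "'a set" and E :: "'a set set" and S :: "'a set"
    and r k :: nat and f :: "nat set \<Rightarrow> nat"
  assumes "r \<ge> 2" and "k \<ge> 3"
    and "f \<in> colorings r (Kk_edges k)"
    and "simple_graph V E"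
    and "S \<subseteq> V" and "S \<noteq> {}" and "indep_set E S"
  shows "\<exists>v\<in>S. count_free r k f (twin_vertices V S) (twin_edges V E S v)
                 \<ge> count_free r k f V E"
proof -
  define F where "F = FA r k f (V - S) (sub_edges E (V - S))"
  define g where "g u cA = card (Dset r k f (V - S \<union> {u}) (sub_edges E (V - S)) (star E u) cA)" for u cA
  define s where "s = card S"
  define \<Phi> where "\<Phi> u = (\<Sum>cA\<in>F. g u cA ^ s)" for u
  have finV: "finite V" using assms(4) unfolding simple_graph_def by blast
  have finS: "finite S" using finV assms(5) finite_subset by blast
  have s0: "s > 0" unfolding s_def using finS assms(6) by (simp add: card_gt_0_iff)
  have cG: "count_free r k f V E = (\<Sum>cA\<in>F. \<Prod>u\<in>S. g u cA)"
    unfolding F_def g_def by (rule master[OF assms(4,5,7)])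
  have cT: "count_free r k f (twin_vertices V S) (twin_edges V E S u) = \<Phi> u" if "u \<in> S" for u
    unfolding \<Phi>_def F_def g_def s_def by (rule twin_count[OF assms(4,5,7) that])
  define M where "M = Max (\<Phi> ` S)"
  have "M \<in> \<Phi> ` S" unfolding M_def using finS assms(6) by (intro Max_in) auto
  then obtain w where w: "w \<in> S" "\<Phi> w = M" by blast
  have wmax: "\<Phi> u \<le> \<Phi> w" if "u \<in> S" for u
    unfolding w(2) M_def using finS that by (intro Max_ge) auto
  have "s * count_free r k f V E = (\<Sum>cA\<in>F. s * (\<Prod>u\<in>S. g u cA))"
    unfolding cG by (simp add: sum_distrib_left)
  also have "\<dots> \<le> (\<Sum>cA\<in>F. \<Sum>u\<in>S. g u cA ^ s)"
    by (rule sum_mono) (unfold s_def, rule amgm_nat[OF finS assms(6)])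
  also have "\<dots> = (\<Sum>u\<in>S. \<Phi> u)" unfolding \<Phi>_def by (rule sum.swap)
  also have "\<dots> \<le> (\<Sum>u\<in>S. \<Phi> w)" by (rule sum_mono) (rule wmax)
  also have "\<dots> = s * \<Phi> w" unfolding s_def by simp
  finally have "s * count_free r k f V E \<le> s * \<Phi> w" .
  then have "count_free r k f V E \<le> \<Phi> w" using s0 by simp
  then have "count_free r k f V E \<le> count_free r k f (twin_vertices V S) (twin_edges V E S w)"
    using cT[OF w(1)] by simp
  then show ?thesis using w(1) by blast
qed

end
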